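(* Let $\mu$ be a classification problem with Bayes regressor $f^*$, $r^*_a:=f^*\sharp(\mu^X_a\times\{a\})$, and fix $q\in\mathcal Q_k$. For each $a\in[m]$ let $\gamma^*_a\in\Gamma(r^*_a,q)$ be an optimal coupling for the cost $c(s,y)=\|s-y\|_1$, and let $T^*_{a}:\Delta_k\to\mathcal Y$ be the randomized function induced by $\gamma^*_a$, i.e. with Markov kernel $K_a(s,B)=\gamma^*_a(B\mid s)$ (a regular conditional distribution of $\gamma^*_a$ given the first coordinate). Define the randomized classifier $\bar h(x,a)=T^*_a(f^*(x,a))$. Then $$\sum_{a\in[m]}\mathrm{Err}_a(\bar h)=\frac12\sum_{a\in[m]}W_1(r^*_a,q)\quad\text{and}\quad \mathbb P(\bar h(X,a)=y\mid A=a)=q(y)\ \ \forall a\in[m],\,y\in\mathcal Y;$$ in particular $\bar h$ satisfies demographic parity.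
   Context: Setup. $\mathcal X$ is a standard Borel space, $k\ge 2$, $\mathcal Y=\{e_1,\dots,e_k\}\subset\mathbb R^k$ is the set of standard basis vectors (one-hot labels), and $\mathcal A=[m]=\{1,\dots,m\}$. A classification problem is a probability distribution $\mu$ of a triple $(X,Y,A)$ on $\mathcal X\times\mathcal Y\times\mathcal A$ with $\mathbb P(A=a)>0$ for every $a$; $\mu_a$ is $\mu$ conditioned on $A=a$ and $\mu^X_a$ is the law of $X$ under $\mu_a$. A randomized function $f:\mathcal U\to\mathcal V$ is given by a Markov kernel $K$ with $\mathbb P(f(u)\in B)=K(u,B)$; its internal randomness is independent of $(X,Y,A)$. A (randomized) classifier is a randomized function $h:\mathcal X\times\mathcal A\to\mathcal Y$, and $\mathrm{Err}_a(h):=\mathbb P(h(X,a)\neq Y\mid A=a)$, over $\mu$ and the randomness of $h$. $h$ satisfies demographic parity (DP) if $\mathbb P(h(X,a)=y\mid A=a)=\mathbb P(h(X,a')=y\mid A=a')$ for all $y,a,a'$. $\Delta_k=\{x\in\mathbb R^k:x\ge0,\ \sum_i x_i=1\}$. The Bayes regressor is $f^*(x,a)=\mathbb E_\mu[Y\mid X=x,A=a]\in\Delta_k$, and $f^*\sharp(\mu^X_a\times\{a\})$ is the law of $f^*(X,a)$ for $X\sim\mu^X_a$. $\mathcal Q_k$ is the set of probability distributions supported on $\mathcal Y$. $\Gamma(p,q)$ is the set of couplings of $p$ and $q$, and $W_1(p,q)=\inf_{\gamma\in\Gamma(p,q)}\int\|s-s'\|_1\,d\gamma(s,s')$. *)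

theory Defs
  imports "HOL-Probability.Probability"
begin

text \<open>Outcomes of the triple (X,Y,A) are elements of type 'x \<times> (real^'k) \<times> nat.
  Labels Y are one-hot vectors in real^'k; groups A are 1..m.\<close>

definition labels :: "(real^'k) set" where
  "labels = range (\<lambda>i. axis i (1::real))"

definition prob_simplex :: "(real^'k) set" where
  "prob_simplex = {s. (\<forall>i. 0 \<le> s $ i) \<and> (\<Sum>i\<in>UNIV. s $ i) = 1}"

definition l1dist :: "real^'k \<Rightarrow> real^'k \<Rightarrow> real" where
  "l1dist s s' = (\<Sum>i\<in>UNIV. \<bar>s $ i - s' $ i\<bar>)"

definition classification_problem ::
    "nat \<Rightarrow> ('x::polish_space \<times> (real^'k) \<times> nat) measure \<Rightarrow> bool" where
  "classification_problem m M \<longleftrightarrow>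
     prob_space M \<and>
     sets M = sets (borel \<Otimes>\<^sub>M borel \<Otimes>\<^sub>M count_space UNIV) \<and>
     (AE \<omega> in M. fst (snd \<omega>) \<in> labels \<and> snd (snd \<omega>) \<in> {1..m}) \<and>
     (\<forall>a\<in>{1..m}. measure M {\<omega>\<in>space M. snd (snd \<omega>) = a} > 0)"

definition cond_group :: "('x \<times> 'y \<times> nat) measure \<Rightarrow> nat \<Rightarrow> ('x \<times> 'y \<times> nat) measure" where
  "cond_group M a = uniform_measure M {\<omega>\<in>space M. snd (snd \<omega>) = a}"

definition marg_X :: "('x::topological_space \<times> 'y \<times> nat) measure \<Rightarrow> nat \<Rightarrow> 'x measure" where
  "marg_X M a = distr (cond_group M a) borel fst"

text \<open>Bayes regressor f*(x,a) = E[Y | X = x, A = a] (a version of the conditional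
  expectation, taking values in the prob_simplex): measurable, and for every Borel B and group a,
  E[Y 1{X \<in> B, A = a}] = E[f*(X,A) 1{X \<in> B, A = a}].\<close>
definition bayes_regressor ::
    "nat \<Rightarrow> ('x::polish_space \<times> (real^'k) \<times> nat) measure \<Rightarrow> ('x \<Rightarrow> nat \<Rightarrow> real^'k) \<Rightarrow> bool" where
  "bayes_regressor m M f \<longleftrightarrow>
     (\<lambda>(x,a). f x a) \<in> borel_measurable (borel \<Otimes>\<^sub>M count_space UNIV) \<and>
     (\<forall>x. \<forall>a\<in>{1..m}. f x a \<in> prob_simplex) \<and>
     (\<forall>a\<in>{1..m}. \<forall>B\<in>sets borel.
        (\<integral>\<omega>. indicator {\<omega>. fst \<omega> \<in> B \<and> snd (snd \<omega>) = a} \<omega> *\<^sub>R fst (snd \<omega>) \<partial>M)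
      = (\<integral>\<omega>. indicator {\<omega>. fst \<omega> \<in> B \<and> snd (snd \<omega>) = a} \<omega> *\<^sub>R f (fst \<omega>) (snd (snd \<omega>)) \<partial>M))"

definition Qk :: "(real^'k) measure \<Rightarrow> bool" where
  "Qk q \<longleftrightarrow> prob_space q \<and> sets q = sets borel \<and> emeasure q labels = 1"

definition couplings :: "'a::topological_space measure \<Rightarrow> 'b::topological_space measure \<Rightarrow> ('a \<times> 'b) measure set" where
  "couplings p q = {\<gamma>. prob_space \<gamma> \<and> sets \<gamma> = sets (borel \<Otimes>\<^sub>M borel) \<and>
                        distr \<gamma> borel fst = p \<and> distr \<gamma> borel snd = q}"

definition W1 :: "(real^'k) measure \<Rightarrow> (real^'k) measure \<Rightarrow> ennreal" where
  "W1 p q = (INF \<gamma>\<in>couplings p q. \<integral>\<^sup>+\<omega>. ennreal (l1dist (fst \<omega>) (snd \<omega>)) \<partial>\<gamma>)"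

definition optimal_coupling :: "(real^'k) measure \<Rightarrow> (real^'k) measure \<Rightarrow> ((real^'k) \<times> (real^'k)) measure \<Rightarrow> bool" where
  "optimal_coupling p q \<gamma> \<longleftrightarrow> \<gamma> \<in> couplings p q \<and>
     (\<integral>\<^sup>+\<omega>. ennreal (l1dist (fst \<omega>) (snd \<omega>)) \<partial>\<gamma>) = W1 p q"

definition reg_cond_dist :: "('a::topological_space \<times> 'b::topological_space) measure \<Rightarrow> ('a \<Rightarrow> 'b measure) \<Rightarrow> bool" where
  "reg_cond_dist \<gamma> K \<longleftrightarrow> K \<in> borel \<rightarrow>\<^sub>M prob_algebra borel \<and>
     (\<forall>A\<in>sets borel. \<forall>B\<in>sets borel.
        emeasure \<gamma> (A \<times> B) = (\<integral>\<^sup>+s. indicator A s * emeasure (K s) B \<partial>(distr \<gamma> borel fst)))"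

text \<open>A randomized classifier is given by its kernel H x a (a probability measure on labels).
  Err_a(h) = P(h(X,a) \<noteq> Y | A = a), and P(h(X,a) = y | A = a).\<close>
definition err_group :: "('x \<times> 'y \<times> nat) measure \<Rightarrow> ('x \<Rightarrow> nat \<Rightarrow> 'y measure) \<Rightarrow> nat \<Rightarrow> real" where
  "err_group M H a = (\<integral>\<omega>. measure (H (fst \<omega>) a) (space (H (fst \<omega>) a) - {fst (snd \<omega>)}) \<partial>(cond_group M a))"

definition pred_prob :: "('x \<times> 'y \<times> nat) measure \<Rightarrow> ('x \<Rightarrow> nat \<Rightarrow> 'y measure) \<Rightarrow> nat \<Rightarrow> 'y \<Rightarrow> real" where
  "pred_prob M H a y = (\<integral>\<omega>. measure (H (fst \<omega>) a) {y} \<partial>(cond_group M a))"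

definition demographic_parity :: "nat \<Rightarrow> ('x \<times> (real^'k) \<times> nat) measure \<Rightarrow> ('x \<Rightarrow> nat \<Rightarrow> (real^'k) measure) \<Rightarrow> bool" where
  "demographic_parity m M H \<longleftrightarrow>
     (\<forall>y\<in>labels. \<forall>a\<in>{1..m}. \<forall>a'\<in>{1..m}. pred_prob M H a y = pred_prob M H a' y)"

end

theory Submission imports Defs begin

lemma disint_meas:
  fixes \<gamma> :: "('a::topological_space \<times> 'b::topological_space) measure"
  assumes sg: "sets \<gamma> = sets (borel \<Otimes>\<^sub>M borel)" and rc: "reg_cond_dist \<gamma> K"
    and B: "B \<in> sets borel"
  shows "distr (density \<gamma> (\<lambda>\<omega>. ennreal (indicator B (snd \<omega>)))) borel fst
       = density (distr \<gamma> borel fst) (\<lambda>s. emeasure (K s) B)"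
proof -
  have fst_m: "fst \<in> \<gamma> \<rightarrow>\<^sub>M borel"
    using measurable_cong_sets[OF sg refl] measurable_fst by blast
  have snd_m: "snd \<in> \<gamma> \<rightarrow>\<^sub>M borel"
    using measurable_cong_sets[OF sg refl] measurable_snd by blast
  have Km: "K \<in> borel \<rightarrow>\<^sub>M prob_algebra borel" and
    H: "\<And>A. A \<in> sets borel \<Longrightarrow> emeasure \<gamma> (A \<times> B) = (\<integral>\<^sup>+s. indicator A s * emeasure (K s) B \<partial>(distr \<gamma> borel fst))"
    using rc B unfolding reg_cond_dist_def by auto
  have KBm: "(\<lambda>s. emeasure (K s) B) \<in> borel_measurable borel"
    using measurable_compose[OF measurable_prob_algebraD[OF Km] measurable_emeasure_subprob_algebra[OF B]] .
  have spg: "space \<gamma> = UNIV" using sets_eq_imp_space_eq[OF sg] by (simp add: space_pair_measure)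
  show ?thesis
  proof (rule measure_eqI)
    show "sets (distr (density \<gamma> (\<lambda>\<omega>. ennreal (indicator B (snd \<omega>)))) borel fst) =
      sets (density (distr \<gamma> borel fst) (\<lambda>s. emeasure (K s) B))" by simp
  next
    fix A assume "A \<in> sets (distr (density \<gamma> (\<lambda>\<omega>. ennreal (indicator B (snd \<omega>)))) borel fst)"
    then have A: "A \<in> sets borel" by simp
    have AB: "A \<times> B \<in> sets \<gamma>" using sg A B by (simp add: pair_measureI)
    have "emeasure (distr (density \<gamma> (\<lambda>\<omega>. ennreal (indicator B (snd \<omega>)))) borel fst) A
        = emeasure (density \<gamma> (\<lambda>\<omega>. ennreal (indicator B (snd \<omega>)))) (fst -` A \<inter> space \<gamma>)"
      using A fst_m by (subst emeasure_distr) (auto simp: measurable_density_eq1)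
    also have "\<dots> = (\<integral>\<^sup>+\<omega>. ennreal (indicator B (snd \<omega>)) * indicator (fst -` A \<inter> space \<gamma>) \<omega> \<partial>\<gamma>)"
      using A fst_m snd_m B
      by (subst emeasure_density) (auto intro!: measurable_compose[OF snd_m] borel_measurable_indicator)
    also have "\<dots> = (\<integral>\<^sup>+\<omega>. indicator (A \<times> B) \<omega> \<partial>\<gamma>)"
      by (rule nn_integral_cong) (auto simp: spg indicator_def)
    also have "\<dots> = emeasure \<gamma> (A \<times> B)" using AB by (rule nn_integral_indicator)
    also have "\<dots> = (\<integral>\<^sup>+s. indicator A s * emeasure (K s) B \<partial>(distr \<gamma> borel fst))" using H[OF A] .
    also have "\<dots> = emeasure (density (distr \<gamma> borel fst) (\<lambda>s. emeasure (K s) B)) A"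
      using A KBm by (subst emeasure_density) (auto simp: mult.commute)
    finally show "emeasure (distr (density \<gamma> (\<lambda>\<omega>. ennreal (indicator B (snd \<omega>)))) borel fst) A =
         emeasure (density (distr \<gamma> borel fst) (\<lambda>s. emeasure (K s) B)) A" .
  qed
qed


lemma disint_int:
  fixes \<gamma> :: "('a::topological_space \<times> 'b::topological_space) measure" and g :: "'a \<Rightarrow> real"
  assumes sg: "sets \<gamma> = sets (borel \<Otimes>\<^sub>M borel)" and rc: "reg_cond_dist \<gamma> K"
    and B: "B \<in> sets borel" and g: "g \<in> borel_measurable borel"
  shows "(\<integral>\<omega>. g (fst \<omega>) * indicator B (snd \<omega>) \<partial>\<gamma>) = (\<integral>s. g s * measure (K s) B \<partial>distr \<gamma> borel fst)"
proof -
  have fst_m: "fst \<in> \<gamma> \<rightarrow>\<^sub>M borel"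
    using measurable_cong_sets[OF sg refl] measurable_fst by blast
  have snd_m: "snd \<in> \<gamma> \<rightarrow>\<^sub>M borel"
    using measurable_cong_sets[OF sg refl] measurable_snd by blast
  have Km: "K \<in> borel \<rightarrow>\<^sub>M prob_algebra borel"
    using rc unfolding reg_cond_dist_def by auto
  have KBm: "(\<lambda>s. measure (K s) B) \<in> borel_measurable borel"
    unfolding measure_def
    by (intro borel_measurable_enn2real measurable_compose[OF measurable_prob_algebraD[OF Km] measurable_emeasure_subprob_algebra[OF B]])
  have Kp: "prob_space (K s)" for s
    using measurable_space[OF Km, of s] by (simp add: space_prob_algebra)
  have em: "(\<lambda>s. emeasure (K s) B) = (\<lambda>s. ennreal (measure (K s) B))"
    using Kp by (simp add: finite_measure.emeasure_eq_measure prob_space.finite_measure)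
  have "(\<integral>\<omega>. g (fst \<omega>) * indicator B (snd \<omega>) \<partial>\<gamma>) = (\<integral>\<omega>. indicator B (snd \<omega>) *\<^sub>R g (fst \<omega>) \<partial>\<gamma>)"
    by (simp add: mult.commute)
  also have "\<dots> = integral\<^sup>L (density \<gamma> (\<lambda>\<omega>. ennreal (indicator B (snd \<omega>)))) (\<lambda>\<omega>. g (fst \<omega>))"
    using fst_m snd_m B g
    by (subst integral_density) (auto intro!: measurable_compose[OF snd_m] measurable_compose[OF fst_m])
  also have "\<dots> = integral\<^sup>L (distr (density \<gamma> (\<lambda>\<omega>. ennreal (indicator B (snd \<omega>)))) borel fst) g"
    using fst_m g by (subst integral_distr) (auto simp: measurable_density_eq1)
  also have "\<dots> = integral\<^sup>L (density (distr \<gamma> borel fst) (\<lambda>s. ennreal (measure (K s) B))) g"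
    using disint_meas[OF sg rc B] em by simp
  also have "\<dots> = (\<integral>s. measure (K s) B *\<^sub>R g s \<partial>distr \<gamma> borel fst)"
    using g KBm by (subst integral_density) auto
  finally show ?thesis by (simp add: mult.commute)
qed

lemma cond_ext:
  fixes M :: "('x::topological_space \<times> 'z) measure" and hy F :: "('x \<times> 'z) \<Rightarrow> real" and g :: "'x \<Rightarrow> real"
  assumes fst_m: "fst \<in> M \<rightarrow>\<^sub>M borel"
    and hm: "hy \<in> borel_measurable M" and Fm: "F \<in> borel_measurable M"
    and h0: "AE \<omega> in M. 0 \<le> hy \<omega>" and F0: "AE \<omega> in M. 0 \<le> F \<omega>"
    and hi: "integrable M hy" and Fi: "integrable M F"
    and eq: "\<And>B. B \<in> sets borel \<Longrightarrow> (\<integral>\<omega>. indicator B (fst \<omega>) * hy \<omega> \<partial>M) = (\<integral>\<omega>. indicator B (fst \<omega>) * F \<omega> \<partial>M)"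
    and g: "g \<in> borel_measurable borel"
  shows "(\<integral>\<omega>. g (fst \<omega>) * hy \<omega> \<partial>M) = (\<integral>\<omega>. g (fst \<omega>) * F \<omega> \<partial>M)"
proof -
  have D: "distr (density M (\<lambda>\<omega>. ennreal (hy \<omega>))) borel fst = distr (density M (\<lambda>\<omega>. ennreal (F \<omega>))) borel fst"
  proof (rule measure_eqI)
    fix B assume "B \<in> sets (distr (density M (\<lambda>\<omega>. ennreal (hy \<omega>))) borel fst)"
    then have B: "B \<in> sets borel" by simp
    have S: "fst -` B \<inter> space M \<in> sets M" using fst_m B by (rule measurable_sets)
    have *: "emeasure (distr (density M (\<lambda>\<omega>. ennreal (u \<omega>))) borel fst) B = ennreal (\<integral>\<omega>. indicator B (fst \<omega>) * u \<omega> \<partial>M)"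
      if um: "u \<in> borel_measurable M" and u0: "AE \<omega> in M. 0 \<le> u \<omega>" and ui: "integrable M u" for u
    proof -
      have "emeasure (distr (density M (\<lambda>\<omega>. ennreal (u \<omega>))) borel fst) B
          = emeasure (density M (\<lambda>\<omega>. ennreal (u \<omega>))) (fst -` B \<inter> space M)"
        using B fst_m by (subst emeasure_distr) (auto simp: measurable_density_eq1)
      also have "\<dots> = (\<integral>\<^sup>+\<omega>. ennreal (u \<omega>) * indicator (fst -` B \<inter> space M) \<omega> \<partial>M)"
        using S um by (subst emeasure_density) auto
      also have "\<dots> = (\<integral>\<^sup>+\<omega>. ennreal (u \<omega> * indicator (fst -` B \<inter> space M) \<omega>) \<partial>M)"
        by (rule nn_integral_cong) (simp add: indicator_def)
      also have "\<dots> = ennreal (\<integral>\<omega>. u \<omega> * indicator (fst -` B \<inter> space M) \<omega> \<partial>M)"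
        using S ui u0 by (intro nn_integral_eq_integral integrable_real_mult_indicator) auto
      also have "(\<integral>\<omega>. u \<omega> * indicator (fst -` B \<inter> space M) \<omega> \<partial>M) = (\<integral>\<omega>. indicator B (fst \<omega>) * u \<omega> \<partial>M)"
        by (rule Bochner_Integration.integral_cong) (auto simp: indicator_def)
      finally show ?thesis .
    qed
    show "emeasure (distr (density M (\<lambda>\<omega>. ennreal (hy \<omega>))) borel fst) B =
         emeasure (distr (density M (\<lambda>\<omega>. ennreal (F \<omega>))) borel fst) B"
      using *[OF hm h0 hi] *[OF Fm F0 Fi] eq[OF B] by simp
  qed simp
  have **: "(\<integral>\<omega>. g (fst \<omega>) * u \<omega> \<partial>M) = integral\<^sup>L (distr (density M (\<lambda>\<omega>. ennreal (u \<omega>))) borel fst) g"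
    if um: "u \<in> borel_measurable M" and u0: "AE \<omega> in M. 0 \<le> u \<omega>" for u
  proof -
    have "(\<integral>\<omega>. g (fst \<omega>) * u \<omega> \<partial>M) = (\<integral>\<omega>. u \<omega> *\<^sub>R g (fst \<omega>) \<partial>M)" by (simp add: mult.commute)
    also have "\<dots> = integral\<^sup>L (density M (\<lambda>\<omega>. ennreal (u \<omega>))) (\<lambda>\<omega>. g (fst \<omega>))"
      using um u0 g fst_m by (subst integral_density) (auto intro!: measurable_compose[OF fst_m])
    also have "\<dots> = integral\<^sup>L (distr (density M (\<lambda>\<omega>. ennreal (u \<omega>))) borel fst) g"
      using fst_m g by (subst integral_distr) (auto simp: measurable_density_eq1)
    finally show ?thesis .
  qed
  show ?thesis using **[OF hm h0] **[OF Fm F0] D by simp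
qed


lemma axis_nth': "axis i x $ j = (if j = i then x else 0)"
  by (simp add: axis_def)

lemma labels_finite: "finite (labels :: (real^'k) set)"
  unfolding labels_def by simp

lemma labels_sets: "(labels :: (real^'k) set) \<in> sets borel"
  using labels_finite by (intro borel_closed finite_imp_closed)

lemma sum_axis_mult: "(\<Sum>j\<in>UNIV. axis i (1::real) $ j * c j) = c i"
  by (simp add: axis_def if_distrib[of "\<lambda>x. x * _"] cong: if_cong)

lemma sum_ind_axis: "(\<Sum>j\<in>UNIV. indicator {axis j (1::real)} (axis i 1) * c j) = (c i :: real)"
  by (simp add: indicator_def axis_eq_axis if_distrib cong: if_cong)

lemma simplex_le1: "s \<in> prob_simplex \<Longrightarrow> s $ i \<le> 1"
proof -
  assume s: "s \<in> prob_simplex"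
  have "s $ i \<le> (\<Sum>j\<in>UNIV. s $ j)"
    using s by (intro member_le_sum) (auto simp: prob_simplex_def)
  then show ?thesis using s by (simp add: prob_simplex_def)
qed

lemma l1_lab: "s \<in> prob_simplex \<Longrightarrow> l1dist s (axis i 1) = 2 - 2 * s $ i"
proof -
  assume s: "s \<in> prob_simplex"
  then have nn: "\<And>j. 0 \<le> s $ j" and sum1: "(\<Sum>j\<in>UNIV. s $ j) = 1" by (auto simp: prob_simplex_def)
  have "l1dist s (axis i 1) = (\<Sum>j\<in>UNIV. (if j = i then 1 - s $ j else s $ j))"
    unfolding l1dist_def using nn simplex_le1[OF s]
    by (intro sum.cong) (auto simp: axis_def)
  also have "\<dots> = (1 - s $ i) + (\<Sum>j\<in>UNIV - {i}. s $ j)"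
    by (subst sum.remove[of _ i]) (auto intro!: sum.cong)
  also have "(\<Sum>j\<in>UNIV - {i}. s $ j) = 1 - s $ i"
    using sum1 sum.remove[of UNIV i "\<lambda>j. s $ j"] by simp
  finally show ?thesis by simp
qed

lemma labels_sum: 
  assumes "prob_space N" "sets N = sets (borel :: (real^'k) measure)"
  shows "measure N labels = (\<Sum>j\<in>UNIV. measure N {axis j 1})"
proof -
  have "measure N labels = (\<Sum>x\<in>labels. measure N {x})"
    using assms by (intro finite_measure.finite_measure_eq_sum_singleton prob_space.finite_measure labels_finite) auto
  also have "\<dots> = (\<Sum>j\<in>UNIV. measure N {axis j 1})"
    unfolding labels_def by (subst sum.reindex) (auto simp: inj_on_def axis_eq_axis)
  finally show ?thesis .
qed


lemma kernel_meas:
  assumes "L \<in> borel \<rightarrow>\<^sub>M prob_algebra borel" "B \<in> sets borel"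
  shows "(\<lambda>s. measure (L s) B) \<in> borel_measurable borel"
  unfolding measure_def
  by (intro borel_measurable_enn2real measurable_compose[OF measurable_prob_algebraD[OF assms(1)] measurable_emeasure_subprob_algebra[OF assms(2)]])

lemma group_res:
  fixes M :: "('x::polish_space \<times> (real^'k) \<times> nat) measure"
    and f :: "'x \<Rightarrow> nat \<Rightarrow> real^'k"
    and q :: "(real^'k) measure"
    and G :: "((real^'k) \<times> (real^'k)) measure"
    and L :: "real^'k \<Rightarrow> (real^'k) measure"
  assumes cp: "classification_problem m M"
    and br: "bayes_regressor m M f"
    and Q: "Qk q"
    and a: "a \<in> {1..m}"
    and opt: "optimal_coupling (distr (marg_X M a) borel (\<lambda>x. f x a)) q G"
    and rc: "reg_cond_dist G L"
    and Llab: "\<forall>s\<in>prob_simplex. emeasure (L s) labels = 1"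
  shows "W1 (distr (marg_X M a) borel (\<lambda>x. f x a)) q
           = ennreal (2 * (\<integral>\<omega>. measure (L (f (fst \<omega>) a)) (space (L (f (fst \<omega>) a)) - {fst (snd \<omega>)}) \<partial>cond_group M a))
         \<and> (\<forall>y\<in>labels. (\<integral>\<omega>. measure (L (f (fst \<omega>) a)) {y} \<partial>cond_group M a) = measure q {y})"
proof -
  define C where "C = cond_group M a"
  define Aa where "Aa = {\<omega>\<in>space M. snd (snd \<omega>) = a}"
  define r where "r = distr (marg_X M a) borel (\<lambda>x. f x a)"
  have PM: "prob_space M" and sM: "sets M = sets (borel \<Otimes>\<^sub>M borel \<Otimes>\<^sub>M count_space UNIV)"
    and AEYA: "AE \<omega> in M. fst (snd \<omega>) \<in> labels \<and> snd (snd \<omega>) \<in> {1..m}"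
    and pa_pos: "measure M Aa > 0"
    using cp a unfolding classification_problem_def Aa_def by auto
  have spM: "space M = UNIV" using sets_eq_imp_space_eq[OF sM] by (simp add: space_pair_measure)
  have X_m: "fst \<in> M \<rightarrow>\<^sub>M borel"
    using measurable_cong_sets[OF sM refl] measurable_fst by blast
  have Y_m: "(\<lambda>\<omega>. fst (snd \<omega>)) \<in> M \<rightarrow>\<^sub>M borel"
    using measurable_cong_sets[OF sM refl] measurable_compose[OF measurable_snd measurable_fst] by blast
  have A_m: "(\<lambda>\<omega>. snd (snd \<omega>)) \<in> M \<rightarrow>\<^sub>M count_space UNIV"
    using measurable_cong_sets[OF sM refl] measurable_compose[OF measurable_snd measurable_snd] by blast
  have Aa_s: "Aa \<in> sets M"
  proof -
    have "(\<lambda>\<omega>. snd (snd \<omega>)) -` {a} \<inter> space M \<in> sets M" using A_m by (rule measurable_sets) simp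
    moreover have "(\<lambda>\<omega>. snd (snd \<omega>)) -` {a} \<inter> space M = Aa" unfolding Aa_def by auto
    ultimately show ?thesis by simp
  qed
  have emA: "emeasure M Aa = ennreal (measure M Aa)"
    using PM by (simp add: finite_measure.emeasure_eq_measure prob_space.finite_measure)
  have C_def': "C = uniform_measure M Aa" unfolding C_def cond_group_def Aa_def ..
  have PC: "prob_space C" unfolding C_def'
    using pa_pos emA by (intro prob_space_uniform_measure) auto
  have sC: "sets C = sets M" unfolding C_def' by simp
  have spC: "space C = space M" unfolding C_def' by simp
  have F_m: "(\<lambda>(x,b). f x b) \<in> borel_measurable (borel \<Otimes>\<^sub>M count_space UNIV)"
    and fsimp: "\<And>x b. b \<in> {1..m} \<Longrightarrow> f x b \<in> prob_simplex"
    and beq: "\<And>B. B \<in> sets borel \<Longrightarrow>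
        (\<integral>\<omega>. indicator {\<omega>. fst \<omega> \<in> B \<and> snd (snd \<omega>) = a} \<omega> *\<^sub>R fst (snd \<omega>) \<partial>M)
      = (\<integral>\<omega>. indicator {\<omega>. fst \<omega> \<in> B \<and> snd (snd \<omega>) = a} \<omega> *\<^sub>R f (fst \<omega>) (snd (snd \<omega>)) \<partial>M)"
    using br a unfolding bayes_regressor_def by auto
  have fa_m: "(\<lambda>x. f x a) \<in> borel_measurable borel"
  proof -
    have "(\<lambda>x. (x, a)) \<in> borel \<rightarrow>\<^sub>M borel \<Otimes>\<^sub>M count_space UNIV" by simp
    from measurable_compose[OF this F_m] show ?thesis by simp
  qed
  have r_eq: "r = distr C borel (\<lambda>\<omega>. f (fst \<omega>) a)"
    unfolding r_def marg_X_def C_def[symmetric]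
    using X_m fa_m sC by (subst distr_distr) (auto simp: comp_def cong: measurable_cong_sets)
  have fX_m: "(\<lambda>\<omega>. f (fst \<omega>) a) \<in> C \<rightarrow>\<^sub>M borel"
    using measurable_compose[OF X_m fa_m] sC by (simp cong: measurable_cong_sets)
  have Pr: "prob_space r" unfolding r_eq using PC fX_m by (intro prob_space.prob_space_distr) auto
  have sr: "sets r = sets borel" unfolding r_eq by simp
  have simp_s: "prob_simplex \<in> sets (borel :: (real^'k) measure)"
    unfolding prob_simplex_def by measurable
  have r_simp: "AE s in r. s \<in> prob_simplex"
    unfolding r_eq using fX_m fsimp[OF a] simp_s by (subst AE_distr_iff) auto
  have dens: "C = density M (\<lambda>x. ennreal (indicator Aa x / measure M Aa))"
  proof -
    have "(\<lambda>x. indicator Aa x / emeasure M Aa) = (\<lambda>x. ennreal (indicator Aa x / measure M Aa))"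
      using pa_pos by (auto simp: emA indicator_def divide_ennreal fun_eq_iff simp flip: ennreal_1)
    then show ?thesis unfolding C_def' uniform_measure_def by simp
  qed
  have intC: "integral\<^sup>L C h = (\<integral>\<omega>. indicator Aa \<omega> * h \<omega> \<partial>M) / measure M Aa"
    if hm: "h \<in> borel_measurable M" for h :: "_ \<Rightarrow> real"
  proof -
    have "integral\<^sup>L C h = (\<integral>\<omega>. (indicator Aa \<omega> / measure M Aa) *\<^sub>R h \<omega> \<partial>M)"
      unfolding dens using hm Aa_s pa_pos by (subst integral_density) auto
    also have "\<dots> = (\<integral>\<omega>. indicator Aa \<omega> * h \<omega> / measure M Aa \<partial>M)" by simp
    finally show ?thesis by simp
  qed
  have GC: "G \<in> couplings r q" and Wopt: "(\<integral>\<^sup>+\<omega>. ennreal (l1dist (fst \<omega>) (snd \<omega>)) \<partial>G) = W1 r q"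
    using opt unfolding optimal_coupling_def r_def by auto
  then have PG: "prob_space G" and sG: "sets G = sets (borel \<Otimes>\<^sub>M borel)"
    and G_fst: "distr G borel fst = r" and G_snd: "distr G borel snd = q"
    unfolding couplings_def by auto
  have Gfst_m: "fst \<in> G \<rightarrow>\<^sub>M borel"
    using measurable_cong_sets[OF sG refl] measurable_fst by blast
  have Gsnd_m: "snd \<in> G \<rightarrow>\<^sub>M borel"
    using measurable_cong_sets[OF sG refl] measurable_snd by blast
  have Lm: "L \<in> borel \<rightarrow>\<^sub>M prob_algebra borel" using rc unfolding reg_cond_dist_def by auto
  have Lp: "prob_space (L s)" and sL: "sets (L s) = sets borel" for s
    using measurable_space[OF Lm, of s] by (auto simp: space_prob_algebra)
  have PQ: "prob_space q" and sQ: "sets q = sets borel" and Qlab: "emeasure q labels = 1"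
    using Q unfolding Qk_def by auto
  have single_s: "{y} \<in> sets (borel :: (real^'k) measure)" for y by simp
  have pred: "(\<integral>\<omega>. measure (L (f (fst \<omega>) a)) {y} \<partial>C) = measure q {y}" for y
  proof -
    have km: "(\<lambda>s. measure (L s) {y}) \<in> borel_measurable borel"
      using kernel_meas[OF Lm single_s] .
    have "(\<integral>\<omega>. measure (L (f (fst \<omega>) a)) {y} \<partial>C) = integral\<^sup>L r (\<lambda>s. measure (L s) {y})"
      unfolding r_eq using fX_m km by (subst integral_distr) auto
    also have "\<dots> = (\<integral>s. 1 * measure (L s) {y} \<partial>distr G borel fst)" using G_fst by simp
    also have "\<dots> = (\<integral>\<omega>. 1 * indicator {y} (snd \<omega>) \<partial>G)"
      by (rule disint_int[OF sG rc single_s, symmetric]) simp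
    also have "\<dots> = integral\<^sup>L (distr G borel snd) (indicator {y})"
      using Gsnd_m by (subst integral_distr) auto
    also have "\<dots> = measure q {y}" using G_snd sQ
      by (simp add: sets_eq_imp_space_eq[OF sQ])
    finally show ?thesis .
  qed
  define \<kappa> where "\<kappa> j s = measure (L s) {axis j (1::real)}" for j s
  have kap_m[measurable]: "(\<lambda>s. \<kappa> j s) \<in> borel_measurable borel" for j
    unfolding \<kappa>_def using kernel_meas[OF Lm single_s] .
  have kap01: "0 \<le> \<kappa> j s" "\<kappa> j s \<le> 1" for j s
    unfolding \<kappa>_def using prob_space.prob_le_1[OF Lp] by auto
  have compl: "measure (L s) (space (L s) - {y}) = 1 - (\<Sum>j\<in>UNIV. indicator {axis j 1} y * \<kappa> j s)"
    if s: "s \<in> prob_simplex" for s y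
  proof (cases "y \<in> labels")
    case True
    then obtain i where y: "y = axis i 1" unfolding labels_def by auto
    show ?thesis unfolding y sum_ind_axis \<kappa>_def
      using sL by (subst prob_space.prob_compl[OF Lp]) auto
  next
    case False
    have "measure (L s) {y} \<le> measure (L s) (space (L s) - labels)"
      using False sL labels_sets by (intro finite_measure.finite_measure_mono prob_space.finite_measure[OF Lp])
        (auto simp: sets_eq_imp_space_eq[OF sL])
    also have "\<dots> = 0"
      using Llab s sL labels_sets by (subst prob_space.prob_compl[OF Lp])
        (auto simp: finite_measure.emeasure_eq_measure[OF prob_space.finite_measure[OF Lp]])
    finally have "measure (L s) {y} = 0" by (simp add: measure_nonneg antisym)
    moreover have "(\<Sum>j\<in>UNIV. indicator {axis j 1} y * \<kappa> j s) = 0"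
      using False unfolding labels_def by (auto intro!: sum.neutral)
    ultimately show ?thesis
      using sL by (subst prob_space.prob_compl[OF Lp]) auto
  qed
  have fA_m: "(\<lambda>\<omega>. f (fst \<omega>) (snd (snd \<omega>))) \<in> borel_measurable M"
    using measurable_compose[OF measurable_Pair[OF X_m A_m] F_m] by simp
  have PMf: "finite_measure M" using PM by (rule prob_space.finite_measure)
  have Yj_m: "(\<lambda>\<omega>. fst (snd \<omega>) $ j) \<in> borel_measurable M" for j
    using measurable_compose[OF Y_m borel_measurable_nth] .
  have fj_m: "(\<lambda>\<omega>. f (fst \<omega>) a $ j) \<in> borel_measurable M" for j
    using measurable_compose[OF measurable_compose[OF X_m fa_m] borel_measurable_nth] .
  have kX_m: "(\<lambda>\<omega>. \<kappa> j (f (fst \<omega>) a)) \<in> borel_measurable M" for j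
    using measurable_compose[OF measurable_compose[OF X_m fa_m] kap_m] .
  have kX2_m: "(\<lambda>x. \<kappa> j (f x a)) \<in> borel_measurable borel" for j
    using measurable_compose[OF fa_m kap_m] .
  have iY_m: "(\<lambda>\<omega>. indicator {axis j (1::real)} (fst (snd \<omega>)) :: real) \<in> borel_measurable M" for j
    using measurable_compose[OF Y_m borel_measurable_indicator[OF single_s]] .
  note [measurable] = X_m Y_m fa_m Aa_s fA_m Yj_m fj_m kX_m kX2_m iY_m
  have beqj: "(\<integral>\<omega>. indicator B (fst \<omega>) * (indicator Aa \<omega> * fst (snd \<omega>) $ j) \<partial>M)
            = (\<integral>\<omega>. indicator B (fst \<omega>) * (indicator Aa \<omega> * f (fst \<omega>) a $ j) \<partial>M)"
    if B: "B \<in> sets borel" for B j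
  proof -
    define S :: "('x \<times> (real^'k) \<times> nat) set" where "S = {\<omega>. fst \<omega> \<in> B \<and> snd (snd \<omega>) = a}"
    have S_s: "S \<in> sets M"
    proof -
      have "S = (fst -` B \<inter> space M) \<inter> Aa" unfolding S_def Aa_def spM by auto
      then show ?thesis using measurable_sets[OF X_m B] Aa_s by auto
    qed
    have I1: "integrable M (\<lambda>\<omega>. indicator S \<omega> *\<^sub>R fst (snd \<omega>))"
    proof (rule finite_measure.integrable_const_bound[OF PMf, where B=1])
      show "AE \<omega> in M. norm (indicator S \<omega> *\<^sub>R fst (snd \<omega>)) \<le> 1"
        using AEYA by eventually_elim (auto simp: labels_def indicator_def norm_axis_1)
      show "(\<lambda>\<omega>. indicator S \<omega> *\<^sub>R fst (snd \<omega>)) \<in> borel_measurable M"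
        using S_s by measurable
    qed
    have I2: "integrable M (\<lambda>\<omega>. indicator S \<omega> *\<^sub>R f (fst \<omega>) (snd (snd \<omega>)))"
    proof (rule finite_measure.integrable_const_bound[OF PMf, where B=1])
      have "norm (indicator S \<omega> *\<^sub>R f (fst \<omega>) (snd (snd \<omega>))) \<le> 1" for \<omega>
      proof (cases "\<omega> \<in> S")
        case True
        then have sx: "f (fst \<omega>) (snd (snd \<omega>)) \<in> prob_simplex" using fsimp[OF a] unfolding S_def by auto
        have "norm (f (fst \<omega>) (snd (snd \<omega>))) \<le> (\<Sum>i\<in>UNIV. \<bar>f (fst \<omega>) (snd (snd \<omega>)) $ i\<bar>)"
          by (rule norm_le_l1_cart)
        also have "\<dots> = 1" using sx by (simp add: prob_simplex_def)
        finally show ?thesis using True by simp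
      qed simp
      then show "AE \<omega> in M. norm (indicator S \<omega> *\<^sub>R f (fst \<omega>) (snd (snd \<omega>))) \<le> 1" by simp
      show "(\<lambda>\<omega>. indicator S \<omega> *\<^sub>R f (fst \<omega>) (snd (snd \<omega>))) \<in> borel_measurable M"
        using S_s by measurable
    qed
    have "(\<integral>\<omega>. indicator B (fst \<omega>) * (indicator Aa \<omega> * fst (snd \<omega>) $ j) \<partial>M)
        = (\<integral>\<omega>. (indicator S \<omega> *\<^sub>R fst (snd \<omega>)) $ j \<partial>M)"
      by (rule Bochner_Integration.integral_cong) (auto simp: S_def Aa_def spM indicator_def)
    also have "\<dots> = (\<integral>\<omega>. indicator S \<omega> *\<^sub>R fst (snd \<omega>) \<partial>M) $ j"
      by (rule integral_bounded_linear[OF bounded_linear_vec_nth I1])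
    also have "\<dots> = (\<integral>\<omega>. indicator S \<omega> *\<^sub>R f (fst \<omega>) (snd (snd \<omega>)) \<partial>M) $ j"
      using beq[OF B] unfolding S_def by simp
    also have "\<dots> = (\<integral>\<omega>. (indicator S \<omega> *\<^sub>R f (fst \<omega>) (snd (snd \<omega>))) $ j \<partial>M)"
      by (rule integral_bounded_linear[OF bounded_linear_vec_nth I2, symmetric])
    also have "\<dots> = (\<integral>\<omega>. indicator B (fst \<omega>) * (indicator Aa \<omega> * f (fst \<omega>) a $ j) \<partial>M)"
      by (rule Bochner_Integration.integral_cong) (auto simp: S_def Aa_def spM indicator_def)
    finally show ?thesis .
  qed
  have T: "(\<integral>\<omega>. indicator {axis j 1} (fst (snd \<omega>)) * \<kappa> j (f (fst \<omega>) a) \<partial>C) = (\<integral>s. s $ j * \<kappa> j s \<partial>r)" for j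
  proof -
    have "(\<integral>\<omega>. indicator {axis j 1} (fst (snd \<omega>)) * \<kappa> j (f (fst \<omega>) a) \<partial>C)
        = (\<integral>\<omega>. indicator Aa \<omega> * (indicator {axis j 1} (fst (snd \<omega>)) * \<kappa> j (f (fst \<omega>) a)) \<partial>M) / measure M Aa"
      by (rule intC) measurable
    also have "(\<integral>\<omega>. indicator Aa \<omega> * (indicator {axis j 1} (fst (snd \<omega>)) * \<kappa> j (f (fst \<omega>) a)) \<partial>M)
        = (\<integral>\<omega>. \<kappa> j (f (fst \<omega>) a) * (indicator Aa \<omega> * fst (snd \<omega>) $ j) \<partial>M)"
    proof (rule integral_cong_AE)
      show "AE \<omega> in M. indicator Aa \<omega> * (indicator {axis j 1} (fst (snd \<omega>)) * \<kappa> j (f (fst \<omega>) a))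
          = \<kappa> j (f (fst \<omega>) a) * (indicator Aa \<omega> * fst (snd \<omega>) $ j)"
        using AEYA by eventually_elim (auto simp: labels_def indicator_def axis_nth' axis_eq_axis)
    qed measurable
    also have "\<dots> = (\<integral>\<omega>. \<kappa> j (f (fst \<omega>) a) * (indicator Aa \<omega> * f (fst \<omega>) a $ j) \<partial>M)"
    proof (rule cond_ext[where g = "\<lambda>x. \<kappa> j (f x a)"])
      show "AE \<omega> in M. 0 \<le> indicator Aa \<omega> * fst (snd \<omega>) $ j"
        using AEYA by eventually_elim (auto simp: labels_def indicator_def axis_def)
      show "AE \<omega> in M. 0 \<le> indicator Aa \<omega> * f (fst \<omega>) a $ j"
        using fsimp[OF a] by (auto simp: indicator_def prob_simplex_def)
      show "integrable M (\<lambda>\<omega>. indicator Aa \<omega> * fst (snd \<omega>) $ j)"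
      proof (rule finite_measure.integrable_const_bound[OF PMf, where B=1])
        show "AE \<omega> in M. norm (indicator Aa \<omega> * fst (snd \<omega>) $ j) \<le> 1"
          using AEYA by eventually_elim (auto simp: labels_def indicator_def axis_def)
      qed measurable
      show "integrable M (\<lambda>\<omega>. indicator Aa \<omega> * f (fst \<omega>) a $ j)"
      proof (rule finite_measure.integrable_const_bound[OF PMf, where B=1])
        show "AE \<omega> in M. norm (indicator Aa \<omega> * f (fst \<omega>) a $ j) \<le> 1"
          using fsimp[OF a] simplex_le1[OF fsimp[OF a]] by (auto simp: indicator_def prob_simplex_def intro!: AE_I2)
      qed measurable
    qed (auto intro!: X_m beqj kX2_m borel_measurable_times borel_measurable_indicator Aa_s Yj_m fj_m)
    also have "\<dots> = (\<integral>\<omega>. indicator Aa \<omega> * (f (fst \<omega>) a $ j * \<kappa> j (f (fst \<omega>) a)) \<partial>M)"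
      by (simp add: mult_ac)
    also have "\<dots> / measure M Aa = (\<integral>\<omega>. f (fst \<omega>) a $ j * \<kappa> j (f (fst \<omega>) a) \<partial>C)"
      by (rule intC[symmetric]) measurable
    also have "\<dots> = (\<integral>s. s $ j * \<kappa> j s \<partial>r)"
      unfolding r_eq using fX_m by (subst integral_distr) auto
    finally show ?thesis .
  qed
  have PCf: "finite_measure C" using PC by (rule prob_space.finite_measure)
  have mC: "(h \<in> borel_measurable C) = (h \<in> borel_measurable M)" for h :: "_ \<Rightarrow> real"
    using measurable_cong_sets[OF sC refl] by blast
  have intj: "integrable C (\<lambda>\<omega>. indicator {axis j 1} (fst (snd \<omega>)) * \<kappa> j (f (fst \<omega>) a))" for j
  proof (rule finite_measure.integrable_const_bound[OF PCf, where B=1])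
    show "AE \<omega> in C. norm (indicator {axis j 1} (fst (snd \<omega>)) * \<kappa> j (f (fst \<omega>) a)) \<le> 1"
      using kap01 by (intro AE_I2) (auto simp: indicator_def)
    show "(\<lambda>\<omega>. indicator {axis j 1} (fst (snd \<omega>)) * \<kappa> j (f (fst \<omega>) a)) \<in> borel_measurable C"
      unfolding mC by measurable
  qed
  have err: "(\<integral>\<omega>. measure (L (f (fst \<omega>) a)) (space (L (f (fst \<omega>) a)) - {fst (snd \<omega>)}) \<partial>C)
      = 1 - (\<Sum>j\<in>UNIV. \<integral>s. s $ j * \<kappa> j s \<partial>r)"
  proof -
    have "(\<integral>\<omega>. measure (L (f (fst \<omega>) a)) (space (L (f (fst \<omega>) a)) - {fst (snd \<omega>)}) \<partial>C)
        = (\<integral>\<omega>. 1 - (\<Sum>j\<in>UNIV. indicator {axis j 1} (fst (snd \<omega>)) * \<kappa> j (f (fst \<omega>) a)) \<partial>C)"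
      using compl[OF fsimp[OF a]] by simp
    also have "\<dots> = 1 - (\<Sum>j\<in>UNIV. \<integral>\<omega>. indicator {axis j 1} (fst (snd \<omega>)) * \<kappa> j (f (fst \<omega>) a) \<partial>C)"
    proof -
      have "(\<integral>\<omega>. 1 - (\<Sum>j\<in>UNIV. indicator {axis j 1} (fst (snd \<omega>)) * \<kappa> j (f (fst \<omega>) a)) \<partial>C)
         = (\<integral>\<omega>. 1 \<partial>C) - (\<integral>\<omega>. (\<Sum>j\<in>UNIV. indicator {axis j 1} (fst (snd \<omega>)) * \<kappa> j (f (fst \<omega>) a)) \<partial>C)"
        by (rule Bochner_Integration.integral_diff) (rule finite_measure.integrable_const[OF PCf], rule Bochner_Integration.integrable_sum, rule intj)
      also have "(\<integral>\<omega>. 1 \<partial>C) = (1::real)" using prob_space.prob_space[OF PC] by (simp add: lebesgue_integral_const)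
      also have "(\<integral>\<omega>. (\<Sum>j\<in>UNIV. indicator {axis j 1} (fst (snd \<omega>)) * \<kappa> j (f (fst \<omega>) a)) \<partial>C)
          = (\<Sum>j\<in>UNIV. \<integral>\<omega>. indicator {axis j 1} (fst (snd \<omega>)) * \<kappa> j (f (fst \<omega>) a) \<partial>C)"
        by (rule Bochner_Integration.integral_sum) (rule intj)
      finally show ?thesis .
    qed
    also have "\<dots> = 1 - (\<Sum>j\<in>UNIV. \<integral>s. s $ j * \<kappa> j s \<partial>r)" using T by simp
    finally show ?thesis .
  qed
  have AEG: "AE \<omega> in G. fst \<omega> \<in> prob_simplex \<and> snd \<omega> \<in> labels"
  proof -
    have "AE s in distr G borel fst. s \<in> prob_simplex" unfolding G_fst by (rule r_simp)
    then have A1: "AE \<omega> in G. fst \<omega> \<in> prob_simplex" using Gfst_m simp_s by (subst (asm) AE_distr_iff) auto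
    have "ennreal (measure q labels) = 1"
      using Qlab by (simp add: finite_measure.emeasure_eq_measure[OF prob_space.finite_measure[OF PQ], symmetric])
    then have "measure q labels = 1" by simp
    then have "AE y in q. y \<in> labels" by (rule prob_space.AE_prob_1[OF PQ])
    then have "AE y in distr G borel snd. y \<in> labels" unfolding G_snd .
    then have A2: "AE \<omega> in G. snd \<omega> \<in> labels" using Gsnd_m labels_sets by (subst (asm) AE_distr_iff) auto
    from A1 A2 show ?thesis by eventually_elim auto
  qed
  have PGf: "finite_measure G" using PG by (rule prob_space.finite_measure)
  have Prf: "finite_measure r" using Pr by (rule prob_space.finite_measure)
  have mG: "(h \<in> borel_measurable G) = (h \<in> borel_measurable (borel \<Otimes>\<^sub>M borel))" for h :: "_ \<Rightarrow> real"
    using measurable_cong_sets[OF sG refl] by blast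
  have mr: "(h \<in> borel_measurable r) = (h \<in> borel_measurable borel)" for h :: "_ \<Rightarrow> real"
    using measurable_cong_sets[OF sr refl] by blast
  have fn_m[measurable]: "(\<lambda>x. fst x $ i) \<in> borel_measurable (borel \<Otimes>\<^sub>M borel :: ((real^'k) \<times> (real^'k)) measure)" for i
    using measurable_compose[OF measurable_fst borel_measurable_nth] .
  have sn_m[measurable]: "(\<lambda>x. snd x $ i) \<in> borel_measurable (borel \<Otimes>\<^sub>M borel :: ((real^'k) \<times> (real^'k)) measure)" for i
    using measurable_compose[OF measurable_snd borel_measurable_nth] .
  have l1_m: "(\<lambda>\<omega>. l1dist (fst \<omega>) (snd \<omega>)) \<in> borel_measurable G"
    unfolding mG l1dist_def by measurable
  have l1_int: "integrable G (\<lambda>\<omega>. l1dist (fst \<omega>) (snd \<omega>))"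
  proof (rule finite_measure.integrable_const_bound[OF PGf _ l1_m, where B=2])
    show "AE \<omega> in G. norm (l1dist (fst \<omega>) (snd \<omega>)) \<le> 2"
      using AEG
    proof eventually_elim
      case (elim \<omega>)
      then obtain i where y: "snd \<omega> = axis i 1" and sx: "fst \<omega> \<in> prob_simplex" unfolding labels_def by auto
      show ?case unfolding y l1_lab[OF sx] using simplex_le1[OF sx, of i] sx by (auto simp: prob_simplex_def)
    qed
  qed
  have l1_nn: "0 \<le> l1dist s y" for s y unfolding l1dist_def by (simp add: sum_nonneg)
  have W_int: "W1 r q = ennreal (\<integral>\<omega>. l1dist (fst \<omega>) (snd \<omega>) \<partial>G)"
    using Wopt nn_integral_eq_integral[OF l1_int AE_I2[OF l1_nn]] by simp
  have gj_int: "integrable G (\<lambda>\<omega>. (2 - 2 * fst \<omega> $ j) * indicator {axis j 1} (snd \<omega>))" for j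
  proof (rule finite_measure.integrable_const_bound[OF PGf, where B=2])
    show "AE \<omega> in G. norm ((2 - 2 * fst \<omega> $ j) * indicator {axis j 1} (snd \<omega>)) \<le> 2"
      using AEG
    proof eventually_elim
      case (elim \<omega>)
      then have sx: "fst \<omega> \<in> prob_simplex" by auto
      show ?case using simplex_le1[OF sx, of j] sx by (auto simp: prob_simplex_def indicator_def)
    qed
    show "(\<lambda>\<omega>. (2 - 2 * fst \<omega> $ j) * indicator {axis j 1} (snd \<omega>)) \<in> borel_measurable G"
      unfolding mG by measurable
  qed
  have l1_eq: "(\<integral>\<omega>. l1dist (fst \<omega>) (snd \<omega>) \<partial>G) = (\<Sum>j\<in>UNIV. \<integral>\<omega>. (2 - 2 * fst \<omega> $ j) * indicator {axis j 1} (snd \<omega>) \<partial>G)"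
  proof -
    have "(\<integral>\<omega>. l1dist (fst \<omega>) (snd \<omega>) \<partial>G) = (\<integral>\<omega>. (\<Sum>j\<in>UNIV. (2 - 2 * fst \<omega> $ j) * indicator {axis j 1} (snd \<omega>)) \<partial>G)"
    proof (rule integral_cong_AE)
      show "(\<lambda>\<omega>. \<Sum>j\<in>UNIV. (2 - 2 * fst \<omega> $ j) * indicator {axis j 1} (snd \<omega>)) \<in> borel_measurable G"
        unfolding mG by measurable
      show "AE \<omega> in G. l1dist (fst \<omega>) (snd \<omega>) = (\<Sum>j\<in>UNIV. (2 - 2 * fst \<omega> $ j) * indicator {axis j 1} (snd \<omega>))"
        using AEG
      proof eventually_elim
        case (elim \<omega>)
        then obtain i where y: "snd \<omega> = axis i 1" and sx: "fst \<omega> \<in> prob_simplex" unfolding labels_def by auto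
        show ?case unfolding y l1_lab[OF sx]
          using sum_ind_axis[where c="\<lambda>j. 2 - 2 * fst \<omega> $ j" and i=i] by (simp add: mult.commute)
      qed
    qed (rule l1_m)
    also have "\<dots> = (\<Sum>j\<in>UNIV. \<integral>\<omega>. (2 - 2 * fst \<omega> $ j) * indicator {axis j 1} (snd \<omega>) \<partial>G)"
      by (rule Bochner_Integration.integral_sum) (rule gj_int)
    finally show ?thesis .
  qed
  have kr_int: "integrable r (\<lambda>s. \<kappa> j s)" for j
    by (rule finite_measure.integrable_const_bound[OF Prf, where B=1]) (use kap01 in \<open>auto simp: mr\<close>)
  have skr_int: "integrable r (\<lambda>s. s $ j * \<kappa> j s)" for j
  proof (rule finite_measure.integrable_const_bound[OF Prf, where B=1])
    show "AE s in r. norm (s $ j * \<kappa> j s) \<le> 1"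
      using r_simp
    proof eventually_elim
      case (elim s)
      have "\<bar>s $ j\<bar> \<le> 1" using simplex_le1[OF elim, of j] elim by (auto simp: prob_simplex_def)
      moreover have "\<bar>\<kappa> j s\<bar> \<le> 1" using kap01[of j s] by simp
      ultimately show ?case by (simp add: abs_mult mult_le_one)
    qed
    show "(\<lambda>s. s $ j * \<kappa> j s) \<in> borel_measurable r" unfolding mr
      by (intro borel_measurable_times borel_measurable_nth kap_m)
  qed
  have each: "(\<integral>\<omega>. (2 - 2 * fst \<omega> $ j) * indicator {axis j 1} (snd \<omega>) \<partial>G)
      = 2 * (\<integral>s. \<kappa> j s \<partial>r) - 2 * (\<integral>s. s $ j * \<kappa> j s \<partial>r)" for j
  proof -
    have gm: "(\<lambda>s. 2 - 2 * s $ j) \<in> borel_measurable (borel :: (real^'k) measure)"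
      by (intro borel_measurable_diff borel_measurable_const borel_measurable_times borel_measurable_nth)
    have "(\<integral>\<omega>. (2 - 2 * fst \<omega> $ j) * indicator {axis j 1} (snd \<omega>) \<partial>G)
        = (\<integral>s. (2 - 2 * s $ j) * \<kappa> j s \<partial>r)"
      using disint_int[OF sG rc single_s gm, of "axis j 1"] G_fst unfolding \<kappa>_def by simp
    also have "\<dots> = (\<integral>s. 2 * \<kappa> j s - 2 * (s $ j * \<kappa> j s) \<partial>r)"
      by (simp add: algebra_simps)
    also have "\<dots> = (\<integral>s. 2 * \<kappa> j s \<partial>r) - (\<integral>s. 2 * (s $ j * \<kappa> j s) \<partial>r)"
      using kr_int skr_int by (intro Bochner_Integration.integral_diff) auto
    also have "\<dots> = 2 * (\<integral>s. \<kappa> j s \<partial>r) - 2 * (\<integral>s. s $ j * \<kappa> j s \<partial>r)"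
      by simp
    finally show ?thesis .
  qed
  have sumk: "(\<Sum>j\<in>UNIV. \<integral>s. \<kappa> j s \<partial>r) = 1"
  proof -
    have "(\<Sum>j\<in>UNIV. \<integral>s. \<kappa> j s \<partial>r) = (\<integral>s. (\<Sum>j\<in>UNIV. \<kappa> j s) \<partial>r)"
      by (rule Bochner_Integration.integral_sum[symmetric]) (rule kr_int)
    also have "\<dots> = (\<integral>s. 1 \<partial>r)"
    proof (rule integral_cong_AE)
      show "AE s in r. (\<Sum>j\<in>UNIV. \<kappa> j s) = 1"
        using r_simp
      proof eventually_elim
        case (elim s)
        have "ennreal (measure (L s) labels) = 1"
          using Llab elim by (simp add: finite_measure.emeasure_eq_measure[OF prob_space.finite_measure[OF Lp], symmetric])
        then have "measure (L s) labels = 1" by simp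
        then show ?case using labels_sum[OF Lp sL] unfolding \<kappa>_def by simp
      qed
    qed (auto simp: mr)
    also have "\<dots> = 1" using prob_space.prob_space[OF Pr] by (simp add: lebesgue_integral_const)
    finally show ?thesis .
  qed
  have W_fin: "W1 r q = ennreal (2 * (1 - (\<Sum>j\<in>UNIV. \<integral>s. s $ j * \<kappa> j s \<partial>r)))"
  proof -
    have "(\<integral>\<omega>. l1dist (fst \<omega>) (snd \<omega>) \<partial>G)
        = (\<Sum>j\<in>UNIV. 2 * (\<integral>s. \<kappa> j s \<partial>r) - 2 * (\<integral>s. s $ j * \<kappa> j s \<partial>r))"
      unfolding l1_eq using each by simp
    also have "\<dots> = 2 * (\<Sum>j\<in>UNIV. \<integral>s. \<kappa> j s \<partial>r) - 2 * (\<Sum>j\<in>UNIV. \<integral>s. s $ j * \<kappa> j s \<partial>r)"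
      by (simp add: sum_subtractf sum_distrib_left)
    also have "\<dots> = 2 * (1 - (\<Sum>j\<in>UNIV. \<integral>s. s $ j * \<kappa> j s \<partial>r))"
      unfolding sumk by simp
    finally show ?thesis using W_int by simp
  qed
  show ?thesis
    using W_fin err pred unfolding C_def r_def by simp
qed

theorem theorem3p3:
  fixes M :: "('x::polish_space \<times> (real^'k) \<times> nat) measure"
    and m :: nat
    and f :: "'x \<Rightarrow> nat \<Rightarrow> real^'k"
    and q :: "(real^'k) measure"
    and \<gamma> :: "nat \<Rightarrow> ((real^'k) \<times> (real^'k)) measure"
    and K :: "nat \<Rightarrow> real^'k \<Rightarrow> (real^'k) measure"
  defines "r \<equiv> (\<lambda>a. distr (marg_X M a) borel (\<lambda>x. f x a))"
  defines "hbar \<equiv> (\<lambda>x a. K a (f x a))"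
  assumes "CARD('k) \<ge> 2"
    and "classification_problem m M"
    and "bayes_regressor m M f"
    and "Qk q"
    and "\<forall>a\<in>{1..m}. optimal_coupling (r a) q (\<gamma> a)"
    and "\<forall>a\<in>{1..m}. reg_cond_dist (\<gamma> a) (K a)"
    and "\<forall>a\<in>{1..m}. \<forall>s\<in>prob_simplex. emeasure (K a s) labels = 1"
  shows "ennreal (\<Sum>a\<in>{1..m}. err_group M hbar a) = (\<Sum>a\<in>{1..m}. W1 (r a) q) / 2
         \<and> (\<forall>a\<in>{1..m}. \<forall>y\<in>labels. pred_prob M hbar a y = measure q {y})
         \<and> demographic_parity m M hbar"
proof -
  have gr: "W1 (r a) q = ennreal (2 * err_group M hbar a) \<and> (\<forall>y\<in>labels. pred_prob M hbar a y = measure q {y})"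
    if a: "a \<in> {1..m}" for a
  proof -
    have o: "optimal_coupling (distr (marg_X M a) borel (\<lambda>x. f x a)) q (\<gamma> a)"
      using assms(7) a unfolding r_def by auto
    have rc: "reg_cond_dist (\<gamma> a) (K a)" using assms(8) a by auto
    have ll: "\<forall>s\<in>prob_simplex. emeasure (K a s) labels = 1" using assms(9) a by auto
    show ?thesis
      using group_res[OF assms(4,5,6) a o rc ll] unfolding err_group_def pred_prob_def hbar_def r_def
      by simp
  qed
  have nn: "0 \<le> err_group M hbar a" for a
    unfolding err_group_def by (rule Bochner_Integration.integral_nonneg) (rule measure_nonneg)
  have "(\<Sum>a\<in>{1..m}. W1 (r a) q) = (\<Sum>a\<in>{1..m}. ennreal (2 * err_group M hbar a))"
    using gr by simp
  also have "\<dots> = ennreal (\<Sum>a\<in>{1..m}. 2 * err_group M hbar a)"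
    using nn by (intro sum_ennreal) simp
  also have "\<dots> = ennreal (2 * (\<Sum>a\<in>{1..m}. err_group M hbar a))"
    by (simp add: sum_distrib_left)
  finally have S0: "(\<Sum>a\<in>{1..m}. W1 (r a) q) = ennreal (2 * (\<Sum>a\<in>{1..m}. err_group M hbar a))" .
  then have S: "(\<Sum>a\<in>{1..m}. W1 (r a) q) / 2 = ennreal (\<Sum>a\<in>{1..m}. err_group M hbar a)"
  proof -
    assume "(\<Sum>a\<in>{1..m}. W1 (r a) q) = ennreal (2 * (\<Sum>a\<in>{1..m}. err_group M hbar a))"
    moreover have "ennreal (2 * x) / 2 = ennreal x" if "0 \<le> x" for x :: real
    proof -
      have "ennreal (2*x) / ennreal 2 = ennreal x" using that by (subst divide_ennreal) auto
      then show ?thesis by simp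
    qed
    ultimately show ?thesis using nn by (simp add: sum_nonneg)
  qed
  have P: "\<forall>a\<in>{1..m}. \<forall>y\<in>labels. pred_prob M hbar a y = measure q {y}" using gr by blast
  then have "demographic_parity m M hbar" unfolding demographic_parity_def by simp
  with S P show ?thesis by simp
qed

end
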